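(* For all $n\ge0$, $$\prod_{i=1}^n(1+q^i)=F_{n+1}(q)+\sum_{k=0}^{n-2}q^kF_k(q)\prod_{i=k+3}^n(1+q^i),$$ where an empty product equals $1$.
   Context: $\Pi_n(13/2,123)$ is the set of layered matchings of $[n]$: set partitions whose blocks are consecutive intervals $[1,i_1]/\dots/[i_{k-1}+1,n]$, each of size $1$ or $2$. $\Pi_0(13/2,123)$ consists of the empty partition. For $\pi=B_1/\dots/B_k$ with $\min B_1<\dots<\min B_k$, $rb(\pi)$ is the number of pairs $(b,B_j)$ with $b\in B_i$, $j>i$, $\max B_j>b$. Define $F_n(q)=\sum_{\pi\in\Pi_n(13/2,123)}q^{rb(\pi)}$, so $F_0(q)=F_1(q)=1$. *)

theory Defs
  imports Main
begin

definition layered_matchings :: "nat \<Rightarrow> nat set set set" where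
  "layered_matchings n = {P. \<Union>P = {1..n}
      \<and> (\<forall>B\<in>P. \<exists>a. B = {a..a} \<or> B = {a..a+1})
      \<and> (\<forall>B\<in>P. \<forall>C\<in>P. B \<noteq> C \<longrightarrow> B \<inter> C = {})}"

definition rb :: "nat set set \<Rightarrow> nat" where
  "rb P = card {(b, C). \<exists>B\<in>P. b \<in> B \<and> C \<in> P \<and> Min B < Min C \<and> b < Max C}"

definition F :: "nat \<Rightarrow> 'a::comm_ring_1 \<Rightarrow> 'a" where
  "F n q = (\<Sum>P\<in>layered_matchings n. q ^ rb P)"

end

theory Submission
  imports Defs
begin

lemma LM_props:
  assumes "P \<in> layered_matchings m"
  shows "\<Union>P = {1..m}" "\<And>B. B \<in> P \<Longrightarrow> finite B \<and> B \<noteq> {}"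
        "finite P"
  using assms unfolding layered_matchings_def
proof -
  assume A: "P \<in> {P. \<Union>P = {1..m} \<and> (\<forall>B\<in>P. \<exists>a. B = {a..a} \<or> B = {a..a+1})
      \<and> (\<forall>B\<in>P. \<forall>C\<in>P. B \<noteq> C \<longrightarrow> B \<inter> C = {})}"
  then show "\<Union>P = {1..m}" by simp
  show "\<And>B. B \<in> P \<Longrightarrow> finite B \<and> B \<noteq> {}" using A by fastforce
  have "P \<subseteq> Pow {1..m}" using A by auto
  then show "finite P" by (rule finite_subset) simp
qed

lemma rb_insert:
  assumes fin: "finite P" and fb: "\<And>B'. B' \<in> P \<Longrightarrow> finite B' \<and> B' \<noteq> {}"
    and fB: "finite B" "B \<noteq> {}" and nB: "B \<notin> P"
    and lt: "\<And>x y. x \<in> \<Union>P \<Longrightarrow> y \<in> B \<Longrightarrow> x < y"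
  shows "rb (insert B P) = rb P + card (\<Union>P)"
proof -
  let ?S = "\<lambda>P. {(b, C). \<exists>B\<in>P. b \<in> B \<and> C \<in> P \<and> Min B < Min C \<and> b < Max C}"
  have minlt: "Min B' < Min B" if "B' \<in> P" for B'
  proof -
    have "Min B' \<in> B'" using fb[OF that] by simp
    then have "Min B' \<in> \<Union>P" using that by blast
    moreover have "Min B \<in> B" using fB by simp
    ultimately show ?thesis using lt by blast
  qed
  have eq: "?S (insert B P) = ?S P \<union> (\<lambda>b. (b, B)) ` \<Union>P"
  proof (intro equalityI subsetI)
    fix x assume "x \<in> ?S (insert B P)"
    then obtain b C B' where x: "x = (b, C)" and B': "B' \<in> insert B P" "b \<in> B'"
      "C \<in> insert B P" "Min B' < Min C" "b < Max C" by blast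
    show "x \<in> ?S P \<union> (\<lambda>b. (b, B)) ` \<Union>P"
    proof (cases "B' = B")
      case True
      then have "C \<noteq> B" using B' by auto
      then have "C \<in> P" using B' by auto
      then show ?thesis using minlt[of C] B' True by auto
    next
      case False
      then have "B' \<in> P" using B' by auto
      then show ?thesis using B' x by auto
    qed
  next
    fix x assume "x \<in> ?S P \<union> (\<lambda>b. (b, B)) ` \<Union>P"
    then show "x \<in> ?S (insert B P)"
    proof
      assume "x \<in> ?S P" then show ?thesis by blast
    next
      assume "x \<in> (\<lambda>b. (b, B)) ` \<Union>P"
      then obtain b B' where x: "x = (b, B)" "B' \<in> P" "b \<in> B'" by blast
      have "b < Max B" using lt[of b "Max B"] x fB by auto
      then show ?thesis using x minlt[of B'] by blast
    qed
  qed
  have finS: "finite (?S P)"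
    by (rule finite_subset[of _ "\<Union>P \<times> P"]) (use fin fb in auto)
  have disj: "?S P \<inter> (\<lambda>b. (b, B)) ` \<Union>P = {}" using nB by auto
  have "card ((\<lambda>b. (b, B)) ` \<Union>P) = card (\<Union>P)"
    by (rule card_image) (auto simp: inj_on_def)
  moreover have "finite (\<Union>P)" using fin fb by auto
  ultimately show ?thesis unfolding rb_def using eq finS disj
    by (simp add: card_Un_disjoint)
qed

lemma LM0: "layered_matchings 0 = {{}}"
proof -
  have "P = {}" if "P \<in> layered_matchings 0" for P
    using LM_props[OF that] by auto
  moreover have "{} \<in> layered_matchings 0" by (simp add: layered_matchings_def)
  ultimately show ?thesis by blast
qed

lemma LM_insert:
  assumes P': "P' \<in> layered_matchings m" and X: "\<exists>a. X = {a..a} \<or> X = {a..a+1}"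
    and D: "\<forall>C\<in>P'. X \<inter> C = {}" and UU: "X \<union> {1..m} = {1..k}"
  shows "insert X P' \<in> layered_matchings k"
proof -
  have U: "\<Union>P' = {1..m}" and sh: "\<forall>B\<in>P'. \<exists>a. B = {a..a} \<or> B = {a..a+1}"
    and dj: "\<forall>B\<in>P'. \<forall>C\<in>P'. B \<noteq> C \<longrightarrow> B \<inter> C = {}"
    using P' by (auto simp: layered_matchings_def)
  show ?thesis unfolding layered_matchings_def mem_Collect_eq
  proof (intro conjI ballI impI)
    show "\<Union>(insert X P') = {1..k}" using U UU by simp
  next
    fix B assume "B \<in> insert X P'" then show "\<exists>a. B = {a..a} \<or> B = {a..a+1}"
      using sh X by blast
  next
    fix B C assume B: "B \<in> insert X P'" and C: "C \<in> insert X P'" and ne: "B \<noteq> C"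
    show "B \<inter> C = {}"
    proof (cases "B = X")
      case True then have "C \<in> P'" using C ne by auto
      then show ?thesis using D True by blast
    next
      case False then have B': "B \<in> P'" using B by auto
      show ?thesis
      proof (cases "C = X")
        case True then have "X \<inter> B = {}" using D B' by blast
        then show ?thesis using True by blast
      next
        case False then have "C \<in> P'" using C by auto
        then show ?thesis using dj B' ne by blast
      qed
    qed
  qed
qed

lemma LM_step:
  "layered_matchings (Suc (Suc n)) =
     insert {n+2} ` layered_matchings (Suc n) \<union> insert {n+1..n+2} ` layered_matchings n"
proof (intro equalityI subsetI)
  fix P assume P: "P \<in> layered_matchings (Suc (Suc n))"
  have U: "\<Union>P = {1..n+2}" using LM_props[OF P] by simp
  have shp: "\<forall>B\<in>P. \<exists>a. B = {a..a} \<or> B = {a..a+1}"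
    and dj: "\<forall>B\<in>P. \<forall>C\<in>P. B \<noteq> C \<longrightarrow> B \<inter> C = {}"
    using P by (auto simp: layered_matchings_def)
  have "n+2 \<in> \<Union>P" using U by simp
  then obtain B where B: "B \<in> P" "n+2 \<in> B" by blast
  have sub: "B \<subseteq> {1..n+2}" using U B by auto
  obtain a where a: "B = {a..a} \<or> B = {a..a+1}" using shp B by blast
  have Bcases: "B = {n+2} \<or> B = {n+1..n+2}"
  proof (cases "B = {a..a}")
    case True then show ?thesis using B by auto
  next
    case False
    then have Ba: "B = {a..a+1}" using a by auto
    then have "a+1 \<in> B" by auto
    then have "a+1 \<le> n+2" using sub by auto
    moreover have "a \<le> n+2" "n+2 \<le> a+1" using B Ba by auto
    ultimately have "a = n+1" using False Ba by (cases "a = n+2") auto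
    then show ?thesis using Ba by auto
  qed
  define P' where "P' = P - {B}"
  have PI: "P = insert B P'" using B P'_def by auto
  have U': "\<Union>P' = {1..n+2} - B"
  proof -
    have "\<Union>P' \<subseteq> {1..n+2} - B" using dj B U unfolding P'_def by blast
    moreover have "{1..n+2} - B \<subseteq> \<Union>P'" using U unfolding P'_def by blast
    ultimately show ?thesis by blast
  qed
  have shp': "\<forall>B\<in>P'. \<exists>a. B = {a..a} \<or> B = {a..a+1}"
    and dj': "\<forall>B\<in>P'. \<forall>C\<in>P'. B \<noteq> C \<longrightarrow> B \<inter> C = {}"
    using shp dj unfolding P'_def by auto
  from Bcases show "P \<in> insert {n+2} ` layered_matchings (Suc n) \<union> insert {n+1..n+2} ` layered_matchings n"
  proof
    assume Bn: "B = {n+2}"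
    have "\<Union>P' = {1..Suc n}" using U' Bn by auto
    then have "P' \<in> layered_matchings (Suc n)" using shp' dj' by (simp add: layered_matchings_def)
    then show ?thesis using PI Bn by auto
  next
    assume Bn: "B = {n+1..n+2}"
    have "\<Union>P' = {1..n}" using U' Bn by auto
    then have "P' \<in> layered_matchings n" using shp' dj' by (simp add: layered_matchings_def)
    then show ?thesis using PI Bn by auto
  qed
next
  fix P assume "P \<in> insert {n+2} ` layered_matchings (Suc n) \<union> insert {n+1..n+2} ` layered_matchings n"
  then show "P \<in> layered_matchings (Suc (Suc n))"
  proof
    assume "P \<in> insert {n+2} ` layered_matchings (Suc n)"
    then obtain P' where P': "P = insert {n+2} P'" "P' \<in> layered_matchings (Suc n)" by blast
    have U: "\<Union>P' = {1..Suc n}" using LM_props[OF P'(2)] by simp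
    have "\<forall>C\<in>P'. {n+2} \<inter> C = {}"
    proof
      fix C assume "C \<in> P'" then have "C \<subseteq> {1..Suc n}" using U by blast
      then show "{n+2} \<inter> C = {}" by auto
    qed
    moreover have "\<exists>a. {n+2} = {a..a} \<or> {n+2} = {a..a+1}" by (intro exI[of _ "n+2"]) simp
    moreover have "{n+2} \<union> {1..Suc n} = {1..Suc (Suc n)}" by auto
    ultimately show ?thesis unfolding P'(1) by (intro LM_insert[OF P'(2)])
  next
    assume "P \<in> insert {n+1..n+2} ` layered_matchings n"
    then obtain P' where P': "P = insert {n+1..n+2} P'" "P' \<in> layered_matchings n" by blast
    have U: "\<Union>P' = {1..n}" using LM_props[OF P'(2)] by simp
    have "\<forall>C\<in>P'. {n+1..n+2} \<inter> C = {}"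
    proof
      fix C assume "C \<in> P'" then have "C \<subseteq> {1..n}" using U by blast
      then show "{n+1..n+2} \<inter> C = {}" by auto
    qed
    moreover have "\<exists>a. {n+1..n+2} = {a..a} \<or> {n+1..n+2} = {a..a+1}" by (intro exI[of _ "n+1"]) simp
    moreover have "{n+1..n+2} \<union> {1..n} = {1..Suc (Suc n)}" by auto
    ultimately show ?thesis unfolding P'(1) by (intro LM_insert[OF P'(2)])
  qed
qed

lemma F0: "F 0 q = 1"
  by (simp add: F_def LM0 rb_def)

lemma F_rec: "F (Suc (Suc n)) q = q^(n+1) * F (Suc n) q + q^n * F n q"
proof -
  let ?A = "layered_matchings (Suc n)" and ?B = "layered_matchings n"
  have finA: "finite ?A"
    by (rule finite_subset[of _ "Pow (Pow {1..Suc n})"]) (auto simp: layered_matchings_def)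
  have finB: "finite ?B"
    by (rule finite_subset[of _ "Pow (Pow {1..n})"]) (auto simp: layered_matchings_def)
  have nA: "{n+2} \<notin> P" if "P \<in> ?A" for P
  proof
    assume "{n+2} \<in> P" then have "n+2 \<in> \<Union>P" by blast
    then show False using LM_props(1)[OF that] by simp
  qed
  have nB: "{n+1..n+2} \<notin> P" if "P \<in> ?B" for P
  proof
    assume "{n+1..n+2} \<in> P" moreover have "n+2 \<in> {n+1..n+2}" by simp
    ultimately have "n+2 \<in> \<Union>P" by blast
    then show False using LM_props(1)[OF that] by simp
  qed
  have injA: "inj_on (insert {n+2}) ?A"
    unfolding inj_on_def using nA by (metis insert_ident)
  have injB: "inj_on (insert {n+1..n+2}) ?B"
    unfolding inj_on_def using nB by (metis insert_ident)
  have disj: "insert {n+2} ` ?A \<inter> insert {n+1..n+2} ` ?B = {}"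
  proof (rule ccontr)
    assume "\<not> ?thesis"
    then obtain P P' where P: "P \<in> ?A" "P' \<in> ?B" "insert {n+2} P = insert {n+1..n+2} P'" by blast
    then have "{n+1..n+2} \<in> insert {n+2} P" by auto
    moreover have "{n+1..n+2} \<noteq> {n+2}" by (metis Suc_n_not_le_n add_2_eq_Suc' atLeastAtMost_iff atLeastAtMost_singleton le_add1 singletonD Suc_eq_plus1 le_refl)
    ultimately have "{n+1..n+2} \<in> P" by auto
    moreover have "n+2 \<in> {n+1..n+2}" by simp
    ultimately have "n+2 \<in> \<Union>P" by blast
    then show False using LM_props(1)[OF P(1)] by simp
  qed
  have rbA: "rb (insert {n+2} P) = rb P + (n+1)" if "P \<in> ?A" for P
  proof -
    have "rb (insert {n+2} P) = rb P + card (\<Union>P)"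
      by (rule rb_insert) (use LM_props[OF that] nA[OF that] in auto)
    then show ?thesis using LM_props(1)[OF that] by simp
  qed
  have rbB: "rb (insert {n+1..n+2} P) = rb P + n" if "P \<in> ?B" for P
  proof -
    have "rb (insert {n+1..n+2} P) = rb P + card (\<Union>P)"
      by (rule rb_insert) (use LM_props[OF that] nB[OF that] in auto)
    then show ?thesis using LM_props(1)[OF that] by simp
  qed
  have "F (Suc (Suc n)) q = (\<Sum>P\<in>insert {n+2} ` ?A. q ^ rb P) + (\<Sum>P\<in>insert {n+1..n+2} ` ?B. q ^ rb P)"
    unfolding F_def LM_step by (rule sum.union_disjoint) (use finA finB disj in auto)
  also have "(\<Sum>P\<in>insert {n+2} ` ?A. q ^ rb P) = (\<Sum>P\<in>?A. q ^ rb (insert {n+2} P))"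
    by (rule sum.reindex[OF injA, unfolded comp_def])
  also have "\<dots> = (\<Sum>P\<in>?A. q^(n+1) * q ^ rb P)"
  proof (rule sum.cong)
    fix P assume "P \<in> ?A" then show "q ^ rb (insert {n+2} P) = q^(n+1) * q ^ rb P"
      using rbA[of P] by (simp add: power_add mult.commute)
  qed simp
  also have "(\<Sum>P\<in>insert {n+1..n+2} ` ?B. q ^ rb P) = (\<Sum>P\<in>?B. q ^ rb (insert {n+1..n+2} P))"
    by (rule sum.reindex[OF injB, unfolded comp_def])
  also have "\<dots> = (\<Sum>P\<in>?B. q^n * q ^ rb P)"
  proof (rule sum.cong)
    fix P assume "P \<in> ?B" then show "q ^ rb (insert {n+1..n+2} P) = q^n * q ^ rb P"
      using rbB[of P] by (simp add: power_add mult.commute)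
  qed simp
  finally show ?thesis by (simp add: F_def sum_distrib_left)
qed

lemma F1: "F 1 q = 1"
proof -
  have "layered_matchings 1 = {{{1}}}"
  proof (intro equalityI subsetI)
    fix P assume P: "P \<in> layered_matchings 1"
    have U: "\<Union>P = {1}" using LM_props(1)[OF P] by simp
    have all: "B = {1}" if "B \<in> P" for B
    proof -
      have "B \<subseteq> {1}" using U that by blast
      moreover have "B \<noteq> {}" using LM_props(2)[OF P that] by simp
      ultimately show ?thesis using subset_singletonD by blast
    qed
    have "P \<noteq> {}" using U by auto
    then have "P = {{1}}" using all by blast
    then show "P \<in> {{{1}}}" by simp
  next
    fix P assume "P \<in> {{{1::nat}}}"
    then have "P = insert {1} {}" by simp
    moreover have "insert {1::nat} {} \<in> layered_matchings 1"
      by (rule LM_insert[of _ 0]) (auto simp: LM0 intro: exI[of _ 1])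
    ultimately show "P \<in> layered_matchings 1" by simp
  qed
  moreover have "rb {{1::nat}} = rb {} + card (\<Union>{})"
    using rb_insert[of "{}" "{1::nat}"] by simp
  moreover have "rb {} = 0" by (simp add: rb_def)
  ultimately show ?thesis by (simp add: F_def)
qed

theorem theorem4p8:
  fixes q :: "'a::comm_ring_1" and n :: nat
  shows "(\<Prod>i=1..n. 1 + q ^ i) =
    F (n + 1) q + (\<Sum>k\<in>{k. k + 2 \<le> n}. q ^ k * F k q * (\<Prod>i=k+3..n. 1 + q ^ i))"
proof -
  have set: "{k. k + 2 \<le> n} = {..<n-1}" for n :: nat by auto
  have "(\<Prod>i=1..n. 1 + q ^ i) =
    F (n + 1) q + (\<Sum>k<n-1. q ^ k * F k q * (\<Prod>i=k+3..n. 1 + q ^ i))"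
  proof (induction n)
    case 0 then show ?case using F1 by simp
  next
    case (Suc n)
    have key: "F (n+2) q + (if n \<ge> 1 then q^(n-1) * F (n-1) q else 0) = (1 + q^(Suc n)) * F (n+1) q"
    proof (cases n)
      case 0 then show ?thesis using F_rec[of 0 q] F0[of q] F1[of q] by (simp add: algebra_simps)
    next
      case (Suc m)
      then show ?thesis using F_rec[of "Suc m" q] F_rec[of m q]
        by (simp add: algebra_simps)
    qed
    have S: "(\<Sum>k<Suc n-1. q ^ k * F k q * (\<Prod>i=k+3..Suc n. 1 + q ^ i)) =
       (1 + q^(Suc n)) * (\<Sum>k<n-1. q ^ k * F k q * (\<Prod>i=k+3..n. 1 + q ^ i))
       + (if n \<ge> 1 then q^(n-1) * F (n-1) q else 0)"
    proof (cases n)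
      case 0 then show ?thesis by simp
    next
      case (Suc m)
      have "(\<Sum>k<Suc n-1. q ^ k * F k q * (\<Prod>i=k+3..Suc n. 1 + q ^ i)) =
        (\<Sum>k<m. q ^ k * F k q * (\<Prod>i=k+3..Suc n. 1 + q ^ i)) + q^m * F m q * (\<Prod>i=m+3..Suc n. 1 + q ^ i)"
        using Suc by simp
      also have "(\<Prod>i=m+3..Suc n. 1 + q ^ i) = 1" using Suc by simp
      also have "(\<Sum>k<m. q ^ k * F k q * (\<Prod>i=k+3..Suc n. 1 + q ^ i)) =
          (\<Sum>k<m. (1 + q^(Suc n)) * (q ^ k * F k q * (\<Prod>i=k+3..n. 1 + q ^ i)))"
      proof (rule sum.cong)
        fix k assume "k \<in> {..<m}"
        then have "\<not> Suc n < k+3" using Suc by simp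
        then show "q ^ k * F k q * (\<Prod>i=k+3..Suc n. 1 + q ^ i) = (1 + q^(Suc n)) * (q ^ k * F k q * (\<Prod>i=k+3..n. 1 + q ^ i))"
          by (simp add: prod.cl_ivl_Suc mult_ac)
      qed simp
      finally show ?thesis using Suc by (simp add: sum_distrib_left)
    qed
    have "(\<Prod>i=1..Suc n. 1 + q ^ i) = (1 + q^(Suc n)) * (\<Prod>i=1..n. 1 + q ^ i)"
      by (simp add: prod.cl_ivl_Suc)
    also have "\<dots> = F (Suc n + 1) q + (\<Sum>k<Suc n-1. q ^ k * F k q * (\<Prod>i=k+3..Suc n. 1 + q ^ i))"
      unfolding Suc.IH S using key by (simp add: algebra_simps)
    finally show ?case .
  qed
  then show ?thesis by (simp only: set)
qed

end
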